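(* Assume the setting described in the context, with $\rho$ atomic and $(\rho,\sim)$ weakly commutative. Fix a deterministic strategy $\Lambda$, an initial distribution $\omega^{\mathrm{init}}$, a permutation $\pi$ of $F$ and an integer $t$. Then there exist a set $\mathrm{Bad}_\pi(t)$ of $\pi$-stable walks and a swapping mapping $\Phi:\mathrm{Bad}(t)\to\mathrm{Bad}_\pi(t)$ that is a bijection.
   Context: Setting: $\Omega$ is a finite set and $F$ a finite set of flaws, each a nonempty subset of $\Omega$; $F_\sigma=\{f:\sigma\in f\}$. For $\sigma\in\Omega$ and $f\in F_\sigma$ there is a probability distribution $\rho(\cdot\mid f,\sigma)$ with support $A(f,\sigma)$. We write $\sigma\xrightarrow{f}\sigma'$ when $f\in F_\sigma$ and $\sigma'\in A(f,\sigma)$. A walk is a sequence $\sigma_1\xrightarrow{w_1}\sigma_2\cdots\xrightarrow{w_t}\sigma_{t+1}$ of such steps; its word is $w_1\ldots w_t$ and its length is $t$. $\sim$ is a symmetric relation on $F$ (loops allowed), with $\Gamma(f)=\{g:f\sim g\}$, $\Gamma^+(f)=\Gamma(f)\cup\{f\}$ and $\Gamma^+(S)=\bigcup_{f\in S}\Gamma^+(f)$. It is assumed that for every step $\sigma\xrightarrow{f}\sigma'$, $F_{\sigma'}\subseteq(F_\sigma\setminus\{f\})\cup\Gamma(f)$. Independent sets are sets $S$ with $f\not\sim g$ for distinct $f,g\in S$, and $\mathrm{Ind}(F)$ is the family of independent sets. Write $f\cong g$ if $f\sim g$ or $f=g$. $\rho$ is atomic if for every $f$ and $\sigma'$ there is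 at most one $\sigma$ with $\sigma\xrightarrow{f}\sigma'$. $(\rho,\sim)$ is weakly commutative if there is an injective map SWAP sending each walk $\sigma_1\xrightarrow{f}\sigma_2\xrightarrow{g}\sigma_3$ with $f\not\sim g$ to a walk $\sigma_1\xrightarrow{g}\sigma_2'\xrightarrow{f}\sigma_3$; fix such a map. A valid swap applied to a walk replaces a consecutive subwalk $\sigma_1\xrightarrow{f}\sigma_2\xrightarrow{g}\sigma_3$ with $f\not\cong g$ by its SWAP image. A swapping mapping is a map on a set of walks that sends each walk to the result of applying some sequence of valid swaps to it. A deterministic strategy assigns to each walk $\sigma_1\xrightarrow{w_1}\cdots\sigma_i$ whose last state is flawed a flaw in $F_{\sigma_i}$. A walk follows the strategy if each $w_i$ is the flaw assigned to its prefix ending at $\sigma_i$. $\mathrm{Bad}(t)$ is the set of walks of length $t$ that start at a state $\sigma_1$ with $\omega^{\mathrm{init}}(\sigma_1)>0$ and follow $\Lambda$; equivalently, the walks of length $t$ produced with positive probability by Algorithm 1 (sample $\sigma$ from $\omega^{\mathrm{init}}$; while $F_\sigma\neq\varnothing$, choose $f\in F_\sigma$ by $\Lambda$ and move to $\sigma'$ sampled from $\rho(\cdot\mid f,\sigma)$). Stable and $\pi$-stable words: a sequence of sets $(I_1,\ldots,I_s)$ with $s\ge1$ is stable if each $I_r\in\mathrm{Ind}(F)$ and $I_{r+1}\subseteq\Gamma^+(I_r)$. A word $W$ is stable if $W=W_1\ldots W_s$ with nonempty words $W_r$ of distinct flaws such that the sequence of their flaw sets is stable. It is $\pi$-stable if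 in addition each $W_r$ is strictly increasing in the order $\preceq_\pi$ induced by the permutation $\pi$. A walk is ($\pi$-)stable if its word is. *)

theory Defs
  imports "HOL-Probability.Probability_Mass_Function"
begin

text \<open>States have type 'a; flaws are sets of states; the transition
distributions are rho f sigma :: 'a pmf. A walk is a start state together
with the list of (flaw, next state) steps.\<close>

type_synonym 'a walk = "'a \<times> ('a set \<times> 'a) list"

definition flaws_at :: "'a set set \<Rightarrow> 'a \<Rightarrow> 'a set set" where
  "flaws_at F \<sigma> = {f \<in> F. \<sigma> \<in> f}"

definition is_step :: "'a set set \<Rightarrow> ('a set \<Rightarrow> 'a \<Rightarrow> 'a pmf) \<Rightarrow> 'a \<Rightarrow> 'a set \<Rightarrow> 'a \<Rightarrow> bool" where
  "is_step F \<rho> \<sigma> f \<sigma>' \<longleftrightarrow> f \<in> flaws_at F \<sigma> \<and> \<sigma>' \<in> set_pmf (\<rho> f \<sigma>)"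

fun steps_ok :: "'a set set \<Rightarrow> ('a set \<Rightarrow> 'a \<Rightarrow> 'a pmf) \<Rightarrow> 'a \<Rightarrow> ('a set \<times> 'a) list \<Rightarrow> bool" where
  "steps_ok F \<rho> \<sigma> [] = True"
| "steps_ok F \<rho> \<sigma> ((f, \<sigma>') # xs) = (is_step F \<rho> \<sigma> f \<sigma>' \<and> steps_ok F \<rho> \<sigma>' xs)"

definition is_walk :: "'a set \<Rightarrow> 'a set set \<Rightarrow> ('a set \<Rightarrow> 'a \<Rightarrow> 'a pmf) \<Rightarrow> 'a walk \<Rightarrow> bool" where
  "is_walk \<Omega> F \<rho> w \<longleftrightarrow> fst w \<in> \<Omega> \<and> steps_ok F \<rho> (fst w) (snd w)"

definition walk_word :: "'a walk \<Rightarrow> 'a set list" where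
  "walk_word w = map fst (snd w)"

definition walk_length :: "'a walk \<Rightarrow> nat" where
  "walk_length w = length (snd w)"

definition end_state :: "'a \<Rightarrow> ('a set \<times> 'a) list \<Rightarrow> 'a" where
  "end_state \<sigma> xs = (if xs = [] then \<sigma> else snd (last xs))"

definition last_state :: "'a walk \<Rightarrow> 'a" where
  "last_state w = end_state (fst w) (snd w)"

definition atomic :: "'a set set \<Rightarrow> ('a set \<Rightarrow> 'a \<Rightarrow> 'a pmf) \<Rightarrow> bool" where
  "atomic F \<rho> \<longleftrightarrow> (\<forall>f \<sigma>1 \<sigma>2 \<sigma>'. is_step F \<rho> \<sigma>1 f \<sigma>' \<and> is_step F \<rho> \<sigma>2 f \<sigma>' \<longrightarrow> \<sigma>1 = \<sigma>2)"

definition swappable_walks :: "'a set \<Rightarrow> 'a set set \<Rightarrow> ('a set \<Rightarrow> 'a \<Rightarrow> 'a pmf)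
    \<Rightarrow> ('a set \<Rightarrow> 'a set \<Rightarrow> bool) \<Rightarrow> 'a walk set" where
  "swappable_walks \<Omega> F \<rho> sim =
     {(\<sigma>1, [(f, \<sigma>2), (g, \<sigma>3)]) | \<sigma>1 f \<sigma>2 g \<sigma>3.
        is_walk \<Omega> F \<rho> (\<sigma>1, [(f, \<sigma>2), (g, \<sigma>3)]) \<and> \<not> sim f g}"

definition is_SWAP :: "'a set \<Rightarrow> 'a set set \<Rightarrow> ('a set \<Rightarrow> 'a \<Rightarrow> 'a pmf)
    \<Rightarrow> ('a set \<Rightarrow> 'a set \<Rightarrow> bool) \<Rightarrow> ('a walk \<Rightarrow> 'a walk) \<Rightarrow> bool" where
  "is_SWAP \<Omega> F \<rho> sim SWAP \<longleftrightarrow>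
     inj_on SWAP (swappable_walks \<Omega> F \<rho> sim) \<and>
     (\<forall>\<sigma>1 f \<sigma>2 g \<sigma>3. (\<sigma>1, [(f, \<sigma>2), (g, \<sigma>3)]) \<in> swappable_walks \<Omega> F \<rho> sim \<longrightarrow>
        (\<exists>\<sigma>2'. SWAP (\<sigma>1, [(f, \<sigma>2), (g, \<sigma>3)]) = (\<sigma>1, [(g, \<sigma>2'), (f, \<sigma>3)]) \<and>
               is_walk \<Omega> F \<rho> (\<sigma>1, [(g, \<sigma>2'), (f, \<sigma>3)])))"

definition weakly_commutative :: "'a set \<Rightarrow> 'a set set \<Rightarrow> ('a set \<Rightarrow> 'a \<Rightarrow> 'a pmf)
    \<Rightarrow> ('a set \<Rightarrow> 'a set \<Rightarrow> bool) \<Rightarrow> bool" where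
  "weakly_commutative \<Omega> F \<rho> sim \<longleftrightarrow> (\<exists>SWAP. is_SWAP \<Omega> F \<rho> sim SWAP)"

definition flaw_cong :: "('a set \<Rightarrow> 'a set \<Rightarrow> bool) \<Rightarrow> 'a set \<Rightarrow> 'a set \<Rightarrow> bool" where
  "flaw_cong sim f g \<longleftrightarrow> sim f g \<or> f = g"

definition valid_swap :: "('a set \<Rightarrow> 'a set \<Rightarrow> bool) \<Rightarrow> ('a walk \<Rightarrow> 'a walk) \<Rightarrow> 'a walk \<Rightarrow> 'a walk \<Rightarrow> bool" where
  "valid_swap sim SWAP w w' \<longleftrightarrow>
     (\<exists>xs f \<sigma>2 g \<sigma>3 ys. snd w = xs @ [(f, \<sigma>2), (g, \<sigma>3)] @ ys \<and> \<not> flaw_cong sim f g \<and>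
        w' = (fst w, xs @ snd (SWAP (end_state (fst w) xs, [(f, \<sigma>2), (g, \<sigma>3)])) @ ys))"

definition swapping_mapping :: "('a set \<Rightarrow> 'a set \<Rightarrow> bool) \<Rightarrow> ('a walk \<Rightarrow> 'a walk)
    \<Rightarrow> 'a walk set \<Rightarrow> ('a walk \<Rightarrow> 'a walk) \<Rightarrow> bool" where
  "swapping_mapping sim SWAP W \<Phi> \<longleftrightarrow> (\<forall>w\<in>W. (valid_swap sim SWAP)\<^sup>*\<^sup>* w (\<Phi> w))"

definition is_strategy :: "'a set \<Rightarrow> 'a set set \<Rightarrow> ('a set \<Rightarrow> 'a \<Rightarrow> 'a pmf) \<Rightarrow> ('a walk \<Rightarrow> 'a set) \<Rightarrow> bool" where
  "is_strategy \<Omega> F \<rho> \<Lambda> \<longleftrightarrow>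
     (\<forall>w. is_walk \<Omega> F \<rho> w \<and> flaws_at F (last_state w) \<noteq> {} \<longrightarrow> \<Lambda> w \<in> flaws_at F (last_state w))"

definition follows :: "('a walk \<Rightarrow> 'a set) \<Rightarrow> 'a walk \<Rightarrow> bool" where
  "follows \<Lambda> w \<longleftrightarrow> (\<forall>i < length (snd w). fst (snd w ! i) = \<Lambda> (fst w, take i (snd w)))"

definition Bad :: "'a set \<Rightarrow> 'a set set \<Rightarrow> ('a set \<Rightarrow> 'a \<Rightarrow> 'a pmf) \<Rightarrow> 'a pmf
    \<Rightarrow> ('a walk \<Rightarrow> 'a set) \<Rightarrow> nat \<Rightarrow> 'a walk set" where
  "Bad \<Omega> F \<rho> \<omega> \<Lambda> t = {w. is_walk \<Omega> F \<rho> w \<and> walk_length w = t \<and> pmf \<omega> (fst w) > 0 \<and> follows \<Lambda> w}"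

definition Gamma :: "'a set set \<Rightarrow> ('a set \<Rightarrow> 'a set \<Rightarrow> bool) \<Rightarrow> 'a set \<Rightarrow> 'a set set" where
  "Gamma F sim f = {g \<in> F. sim f g}"

definition Gamma_plus :: "'a set set \<Rightarrow> ('a set \<Rightarrow> 'a set \<Rightarrow> bool) \<Rightarrow> 'a set set \<Rightarrow> 'a set set" where
  "Gamma_plus F sim S = (\<Union>f\<in>S. insert f (Gamma F sim f))"

definition Ind :: "'a set set \<Rightarrow> ('a set \<Rightarrow> 'a set \<Rightarrow> bool) \<Rightarrow> 'a set set set" where
  "Ind F sim = {S. S \<subseteq> F \<and> (\<forall>f\<in>S. \<forall>g\<in>S. f \<noteq> g \<longrightarrow> \<not> sim f g)}"

definition stable_seq :: "'a set set \<Rightarrow> ('a set \<Rightarrow> 'a set \<Rightarrow> bool) \<Rightarrow> 'a set set list \<Rightarrow> bool" where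
  "stable_seq F sim Is \<longleftrightarrow> Is \<noteq> [] \<and> (\<forall>I\<in>set Is. I \<in> Ind F sim) \<and>
     (\<forall>r. Suc r < length Is \<longrightarrow> Is ! Suc r \<subseteq> Gamma_plus F sim (Is ! r))"

definition stable_word :: "'a set set \<Rightarrow> ('a set \<Rightarrow> 'a set \<Rightarrow> bool) \<Rightarrow> 'a set list \<Rightarrow> bool" where
  "stable_word F sim W \<longleftrightarrow> (\<exists>Ws. W = concat Ws \<and> (\<forall>V\<in>set Ws. V \<noteq> [] \<and> distinct V) \<and>
      stable_seq F sim (map set Ws))"

text \<open>pi : F -> {0..<card F} a bijection; f precedes g iff pi f <= pi g.\<close>
definition pi_stable_word :: "'a set set \<Rightarrow> ('a set \<Rightarrow> 'a set \<Rightarrow> bool) \<Rightarrow> ('a set \<Rightarrow> nat) \<Rightarrow> 'a set list \<Rightarrow> bool" where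
  "pi_stable_word F sim \<pi> W \<longleftrightarrow> (\<exists>Ws. W = concat Ws \<and> (\<forall>V\<in>set Ws. V \<noteq> [] \<and> distinct V) \<and>
      stable_seq F sim (map set Ws) \<and> (\<forall>V\<in>set Ws. sorted_wrt (\<lambda>f g. \<pi> f < \<pi> g) V))"

definition pi_stable_walk :: "'a set set \<Rightarrow> ('a set \<Rightarrow> 'a set \<Rightarrow> bool) \<Rightarrow> ('a set \<Rightarrow> nat) \<Rightarrow> 'a walk \<Rightarrow> bool" where
  "pi_stable_walk F sim \<pi> w \<longleftrightarrow> pi_stable_word F sim \<pi> (walk_word w)"

end

theory Submission
  imports Defs
begin


definition wstep :: "'a set set \<Rightarrow> ('a set \<Rightarrow> 'a set \<Rightarrow> bool) \<Rightarrow> 'a set list \<Rightarrow> 'a set list \<Rightarrow> bool" where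
  "wstep F sim W W' \<longleftrightarrow> (\<exists>xs a b ys. W = xs @ [a, b] @ ys \<and> a \<in> F \<and> b \<in> F \<and>
      \<not> flaw_cong sim a b \<and> W' = xs @ [b, a] @ ys)"

lemma wstep_app: "wstep F sim A B \<Longrightarrow> wstep F sim (xs @ A @ ys) (xs @ B @ ys)"
  unfolding wstep_def
  apply clarify
  subgoal for as a b bs by (rule exI[of _ "xs @ as"], rule exI[of _ a], rule exI[of _ b], rule exI[of _ "bs @ ys"]) auto
  done

lemma weq_app: "(wstep F sim)\<^sup>*\<^sup>* A B \<Longrightarrow> (wstep F sim)\<^sup>*\<^sup>* (xs @ A @ ys) (xs @ B @ ys)"
  by (induction rule: rtranclp_induct) (auto intro: rtranclp.rtrancl_into_rtrancl wstep_app)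

lemma weq_Cons: "(wstep F sim)\<^sup>*\<^sup>* A B \<Longrightarrow> (wstep F sim)\<^sup>*\<^sup>* (x # A) (x # B)"
  using weq_app[of F sim A B "[x]" "[]"] by simp

lemma weq_append2: "(wstep F sim)\<^sup>*\<^sup>* A B \<Longrightarrow> (wstep F sim)\<^sup>*\<^sup>* (A @ ys) (B @ ys)"
  using weq_app[of F sim A B "[]" ys] by simp

lemma wstep_length: "wstep F sim A B \<Longrightarrow> length A = length B"
  unfolding wstep_def by auto

lemma weq_length: "(wstep F sim)\<^sup>*\<^sup>* A B \<Longrightarrow> length A = length B"
  by (induction rule: rtranclp_induct) (auto dest: wstep_length)

lemma wstep_sym:
  assumes sym: "\<forall>f\<in>F. \<forall>g\<in>F. sim f g \<longrightarrow> sim g f" and "wstep F sim A B"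
  shows "wstep F sim B A"
  using assms unfolding wstep_def flaw_cong_def by blast

lemma weq_sym:
  assumes sym: "\<forall>f\<in>F. \<forall>g\<in>F. sim f g \<longrightarrow> sim g f" and "(wstep F sim)\<^sup>*\<^sup>* A B"
  shows "(wstep F sim)\<^sup>*\<^sup>* B A"
  using assms(2)
  by (induction rule: rtranclp_induct)
     (auto intro: converse_rtranclp_into_rtranclp wstep_sym[OF sym])

lemma wstep_remove1:
  assumes "wstep F sim A B"
  shows "wstep F sim (remove1 f A) (remove1 f B) \<or> remove1 f A = remove1 f B"
proof -
  from assms obtain xs a b ys where A: "A = xs @ [a, b] @ ys" and ab: "a \<in> F" "b \<in> F"
    "\<not> flaw_cong sim a b" and B: "B = xs @ [b, a] @ ys" unfolding wstep_def by blast
  have neq: "a \<noteq> b" using ab(3) unfolding flaw_cong_def by auto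
  show ?thesis
  proof (cases "f \<in> set xs")
    case True
    then have "remove1 f A = remove1 f xs @ [a, b] @ ys" "remove1 f B = remove1 f xs @ [b, a] @ ys"
      unfolding A B by (simp_all add: remove1_append)
    then show ?thesis using ab unfolding wstep_def by blast
  next
    case False
    then have A': "remove1 f A = xs @ remove1 f ([a,b] @ ys)" and B': "remove1 f B = xs @ remove1 f ([b,a] @ ys)"
      unfolding A B by (simp_all add: remove1_append)
    show ?thesis
    proof (cases "f = a \<or> f = b")
      case True then show ?thesis using neq A' B' by auto
    next
      case False
      then have "remove1 f A = xs @ [a,b] @ remove1 f ys" "remove1 f B = xs @ [b,a] @ remove1 f ys"
        using A' B' by auto
      then show ?thesis using ab unfolding wstep_def by blast
    qed
  qed
qed

lemma weq_remove1: "(wstep F sim)\<^sup>*\<^sup>* A B \<Longrightarrow> (wstep F sim)\<^sup>*\<^sup>* (remove1 f A) (remove1 f B)"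
proof (induction rule: rtranclp_induct)
  case base then show ?case by simp
next
  case (step y z)
  from wstep_remove1[OF step(2), of f] step(3) show ?case by auto
qed

lemma weq_cancel: "(wstep F sim)\<^sup>*\<^sup>* (f # A) (f # B) \<Longrightarrow> (wstep F sim)\<^sup>*\<^sup>* A B"
  using weq_remove1[of F sim "f # A" "f # B" f] by simp

lemma wstep_set: "wstep F sim A B \<Longrightarrow> set A = set B"
  unfolding wstep_def by auto

lemma weq_set: "(wstep F sim)\<^sup>*\<^sup>* A B \<Longrightarrow> set A = set B"
  by (induction rule: rtranclp_induct) (auto dest: wstep_set)

fun lay :: "('a set \<Rightarrow> 'a set \<Rightarrow> bool) \<Rightarrow> 'a set set \<Rightarrow> 'a set list \<Rightarrow> 'a set list \<times> 'a set list" where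
  "lay sim S [] = ([], [])"
| "lay sim S (x # xs) = (let p = lay sim (insert x S) xs in
     if (\<forall>y\<in>S. \<not> flaw_cong sim y x) then (x # fst p, snd p) else (fst p, x # snd p))"

lemma lay_len: "length (fst (lay sim S W)) + length (snd (lay sim S W)) = length W"
  by (induction W arbitrary: S) (auto simp: Let_def)

lemma lay_set: "set (fst (lay sim S W)) \<union> set (snd (lay sim S W)) = set W"
  by (induction W arbitrary: S) (auto simp: Let_def)

lemma lay_min: "l \<in> set (fst (lay sim S W)) \<Longrightarrow> y \<in> S \<Longrightarrow> \<not> flaw_cong sim y l"
  by (induction W arbitrary: S) (auto simp: Let_def split: if_splits)

lemma lay_sorted: "sorted_wrt (\<lambda>a b. \<not> flaw_cong sim a b) (fst (lay sim S W))"
proof (induction W arbitrary: S)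
  case Nil then show ?case by simp
next
  case (Cons x W)
  have "\<forall>l\<in>set (fst (lay sim (insert x S) W)). \<not> flaw_cong sim x l"
    using lay_min by blast
  then show ?case using Cons by (auto simp: Let_def)
qed

lemma lay_ne: "W \<noteq> [] \<Longrightarrow> fst (lay sim {} W) \<noteq> []"
  by (cases W) (auto simp: Let_def)

lemma move_right:
  assumes "\<forall>l\<in>set L. l \<in> F \<and> \<not> flaw_cong sim x l" "x \<in> F"
  shows "(wstep F sim)\<^sup>*\<^sup>* (x # L @ R) (L @ x # R)"
  using assms
proof (induction L)
  case Nil then show ?case by simp
next
  case (Cons l L)
  have "wstep F sim (x # l # L @ R) (l # x # L @ R)"
    unfolding wstep_def using Cons.prems
    by (intro exI[of _ "[]"] exI[of _ x] exI[of _ l] exI[of _ "L @ R"]) auto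
  moreover have "(wstep F sim)\<^sup>*\<^sup>* (l # x # L @ R) (l # L @ x # R)"
    using Cons by (auto intro: weq_Cons)
  ultimately show ?case by (auto intro: converse_rtranclp_into_rtranclp)
qed

lemma lay_weq: "set W \<subseteq> F \<Longrightarrow> (wstep F sim)\<^sup>*\<^sup>* W (fst (lay sim S W) @ snd (lay sim S W))"
proof (induction W arbitrary: S)
  case Nil then show ?case by simp
next
  case (Cons x W)
  let ?p = "lay sim (insert x S) W"
  have IH: "(wstep F sim)\<^sup>*\<^sup>* (x # W) (x # fst ?p @ snd ?p)"
    using Cons by (auto intro: weq_Cons)
  show ?case
  proof (cases "\<forall>y\<in>S. \<not> flaw_cong sim y x")
    case True then show ?thesis using IH by (simp add: Let_def)
  next
    case False
    have "\<forall>l\<in>set (fst ?p). l \<in> F \<and> \<not> flaw_cong sim x l"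
      using lay_min[of _ sim "insert x S" W x] lay_set[of sim "insert x S" W] Cons.prems by auto
    then have "(wstep F sim)\<^sup>*\<^sup>* (x # fst ?p @ snd ?p) (fst ?p @ x # snd ?p)"
      using move_right Cons.prems by auto
    then show ?thesis using IH False by (simp add: Let_def)
  qed
qed

lemma lay_witness:
  "T \<subseteq> S \<Longrightarrow> x \<in> set (fst (lay sim T (snd (lay sim S W)))) \<Longrightarrow>
     (\<exists>y\<in>S - T. flaw_cong sim y x) \<or> (\<exists>y\<in>set (fst (lay sim S W)). flaw_cong sim y x)"
proof (induction W arbitrary: S T)
  case Nil then show ?case by simp
next
  case (Cons w W)
  let ?p = "lay sim (insert w S) W"
  show ?case
  proof (cases "\<forall>y\<in>S. \<not> flaw_cong sim y w")
    case True
    then have "x \<in> set (fst (lay sim T (snd ?p)))" using Cons.prems by (simp add: Let_def)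
    from Cons.IH[OF _ this] Cons.prems(1) True show ?thesis by (auto simp: Let_def)
  next
    case False
    let ?q = "lay sim (insert w T) (snd ?p)"
    have "x \<in> set (fst (lay sim T (w # snd ?p)))" using Cons.prems False by (simp add: Let_def)
    then consider "x = w" "\<forall>y\<in>T. \<not> flaw_cong sim y w" | "x \<in> set (fst ?q)"
      by (auto simp: Let_def split: if_splits)
    then show ?thesis
    proof cases
      case 1 then show ?thesis using False by auto
    next
      case 2
      from Cons.IH[of "insert w T" "insert w S", OF _ 2] Cons.prems(1) False
      show ?thesis by (auto simp: Let_def)
    qed
  qed
qed



lemma insort_weq:
  assumes "\<forall>y\<in>set L. y \<in> F \<and> \<not> flaw_cong sim x y \<and> \<not> flaw_cong sim y x" "x \<in> F"
  shows "(wstep F sim)\<^sup>*\<^sup>* (x # L) (insort_key \<pi> x L)"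
  using assms
proof (induction L)
  case Nil then show ?case by simp
next
  case (Cons y L)
  show ?case
  proof (cases "\<pi> x \<le> \<pi> y")
    case True then show ?thesis by simp
  next
    case False
    have "wstep F sim (x # y # L) (y # x # L)"
      unfolding wstep_def using Cons.prems
      by (intro exI[of _ "[]"] exI[of _ x] exI[of _ y] exI[of _ L]) auto
    moreover have "(wstep F sim)\<^sup>*\<^sup>* (y # x # L) (y # insort_key \<pi> x L)"
      using Cons by (auto intro: weq_Cons)
    ultimately show ?thesis using False by (auto intro: converse_rtranclp_into_rtranclp)
  qed
qed

lemma sort_weq:
  assumes "sorted_wrt (\<lambda>a b. \<not> flaw_cong sim a b) L" "set L \<subseteq> F"
    and sym: "\<forall>f\<in>F. \<forall>g\<in>F. sim f g \<longrightarrow> sim g f"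
  shows "(wstep F sim)\<^sup>*\<^sup>* L (sort_key \<pi> L)"
  using assms(1,2)
proof (induction L)
  case Nil then show ?case by simp
next
  case (Cons x L)
  have a: "(wstep F sim)\<^sup>*\<^sup>* (x # L) (x # sort_key \<pi> L)"
    using Cons by (auto intro: weq_Cons)
  have "\<forall>y\<in>set (sort_key \<pi> L). y \<in> F \<and> \<not> flaw_cong sim x y \<and> \<not> flaw_cong sim y x"
    using Cons.prems sym unfolding flaw_cong_def by auto
  then have "(wstep F sim)\<^sup>*\<^sup>* (x # sort_key \<pi> L) (insort_key \<pi> x (sort_key \<pi> L))"
    using Cons.prems by (intro insort_weq) auto
  then show ?case using a by simp
qed

lemma sorted_distinct: "sorted_wrt (\<lambda>a b. \<not> flaw_cong sim a b) L \<Longrightarrow> distinct L"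
  by (induction L) (auto simp: flaw_cong_def)

lemma sorted_indep:
  assumes "sorted_wrt (\<lambda>a b. \<not> flaw_cong sim a b) L" "set L \<subseteq> F"
    and sym: "\<forall>f\<in>F. \<forall>g\<in>F. sim f g \<longrightarrow> sim g f"
  shows "set L \<in> Ind F sim"
  using assms(1,2) unfolding Ind_def
proof (induction L)
  case Nil then show ?case by simp
next
  case (Cons x L)
  have IH: "\<forall>f\<in>set L. \<forall>g\<in>set L. f \<noteq> g \<longrightarrow> \<not> sim f g" using Cons by simp
  have h: "\<forall>y\<in>set L. \<not> sim x y" using Cons.prems(1) unfolding flaw_cong_def by simp
  have F: "x \<in> F" "set L \<subseteq> F" using Cons.prems(2) by auto
  have "\<forall>f\<in>set (x # L). \<forall>g\<in>set (x # L). f \<noteq> g \<longrightarrow> \<not> sim f g"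
  proof (intro ballI impI)
    fix f g assume f: "f \<in> set (x # L)" and g: "g \<in> set (x # L)" and fg: "f \<noteq> g"
    show "\<not> sim f g"
    proof (cases "f = x")
      case True then show ?thesis using h g fg by auto
    next
      case False
      then have f': "f \<in> set L" using f by simp
      show ?thesis
      proof (cases "g = x")
        case True
        have "\<not> sim x f" using h f' by blast
        moreover have "f \<in> F" using f' F by auto
        ultimately show ?thesis using True sym F(1) by blast
      next
        case False
        then show ?thesis using IH f' g fg by simp
      qed
    qed
  qed
  then show ?case using Cons.prems(2) by blast
qed

fun layers :: "('a set \<Rightarrow> 'a set \<Rightarrow> bool) \<Rightarrow> ('a set \<Rightarrow> nat) \<Rightarrow> nat \<Rightarrow> 'a set list \<Rightarrow> 'a set list list" where
  "layers sim \<pi> 0 W = []"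
| "layers sim \<pi> (Suc n) W = (if W = [] then [] else
     sort_key \<pi> (fst (lay sim {} W)) # layers sim \<pi> n (snd (lay sim {} W)))"

lemma layers_props:
  assumes sym: "\<forall>f\<in>F. \<forall>g\<in>F. sim f g \<longrightarrow> sim g f"
    and inj: "inj_on \<pi> F"
  shows "length W \<le> n \<Longrightarrow> set W \<subseteq> F \<Longrightarrow>
    (layers sim \<pi> n W = [] \<longleftrightarrow> W = []) \<and>
    (\<forall>V\<in>set (layers sim \<pi> n W). V \<noteq> [] \<and> distinct V \<and> set V \<in> Ind F sim \<and>
        sorted_wrt (\<lambda>f g. \<pi> f < \<pi> g) V) \<and>
    (\<forall>r. Suc r < length (layers sim \<pi> n W) \<longrightarrow>
        set (layers sim \<pi> n W ! Suc r) \<subseteq> Gamma_plus F sim (set (layers sim \<pi> n W ! r))) \<and>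
    (wstep F sim)\<^sup>*\<^sup>* W (concat (layers sim \<pi> n W))"
proof (induction n arbitrary: W)
  case 0 then show ?case by simp
next
  case (Suc n)
  show ?case
  proof (cases "W = []")
    case True then show ?thesis by simp
  next
    case False
    define L where "L = fst (lay sim {} W)"
    define R where "R = snd (lay sim {} W)"
    have Lne: "L \<noteq> []" using lay_ne False L_def by auto
    have "length L > 0" using Lne by simp
    then have lenR: "length R \<le> n" using lay_len[of sim "{}" W] Suc.prems unfolding L_def R_def
      by linarith
    have setLR: "set L \<subseteq> F" "set R \<subseteq> F" using lay_set[of sim "{}" W] Suc.prems L_def R_def by auto
    note IH = Suc.IH[OF lenR setLR(2)]
    have sL: "sorted_wrt (\<lambda>a b. \<not> flaw_cong sim a b) L" using lay_sorted L_def by auto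
    have eq: "layers sim \<pi> (Suc n) W = sort_key \<pi> L # layers sim \<pi> n R"
      using False L_def R_def by simp
    have P2: "\<forall>V\<in>set (layers sim \<pi> (Suc n) W). V \<noteq> [] \<and> distinct V \<and> set V \<in> Ind F sim \<and>
        sorted_wrt (\<lambda>f g. \<pi> f < \<pi> g) V"
    proof -
      have d: "distinct L" using sorted_distinct[OF sL] .
      have "inj_on \<pi> (set (sort_key \<pi> L))" using inj setLR(1) by (auto intro: inj_on_subset)
      then have "distinct (map \<pi> (sort_key \<pi> L))" using d by (simp add: distinct_map)
      then have "sorted_wrt (<) (map \<pi> (sort_key \<pi> L))"
        by (simp add: strict_sorted_iff del: sorted_map)
      then have "sorted_wrt (\<lambda>f g. \<pi> f < \<pi> g) (sort_key \<pi> L)" by (simp add: sorted_wrt_map)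
      moreover have "set (sort_key \<pi> L) \<in> Ind F sim" using sorted_indep[OF sL setLR(1) sym] by simp
      moreover have "sort_key \<pi> L \<noteq> []" using Lne by (metis set_sort set_empty)
      moreover have IH2: "\<forall>V\<in>set (layers sim \<pi> n R). V \<noteq> [] \<and> distinct V \<and> set V \<in> Ind F sim \<and>
        sorted_wrt (\<lambda>f g. \<pi> f < \<pi> g) V" using IH by blast
      ultimately show ?thesis unfolding eq using d by (simp only: list.set insert_iff ball_simps distinct_sort) blast
    qed
    have P3: "\<forall>r. Suc r < length (layers sim \<pi> (Suc n) W) \<longrightarrow>
        set (layers sim \<pi> (Suc n) W ! Suc r) \<subseteq> Gamma_plus F sim (set (layers sim \<pi> (Suc n) W ! r))"
    proof (intro allI impI)
      fix r assume r: "Suc r < length (layers sim \<pi> (Suc n) W)"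
      show "set (layers sim \<pi> (Suc n) W ! Suc r) \<subseteq> Gamma_plus F sim (set (layers sim \<pi> (Suc n) W ! r))"
      proof (cases r)
        case 0
        have "layers sim \<pi> n R \<noteq> []" using r eq 0 by auto
        then obtain m where m: "n = Suc m" "R \<noteq> []" by (cases n) (auto split: if_splits)
        then have l1: "layers sim \<pi> (Suc n) W ! Suc r = sort_key \<pi> (fst (lay sim {} R))"
          using eq 0 by simp
        show ?thesis
        proof
          fix x assume x0: "x \<in> set (layers sim \<pi> (Suc n) W ! Suc r)"
          then have x: "x \<in> set (fst (lay sim {} R))" using l1 by simp
          then obtain y where y: "y \<in> set L" "flaw_cong sim y x"
            using lay_witness[of "{}" "{}" x sim W] unfolding L_def R_def by auto
          have "x \<in> F" using x lay_set[of sim "{}" R] setLR(2) by auto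
          then have "x \<in> Gamma_plus F sim (set L)"
            using y unfolding Gamma_plus_def Gamma_def flaw_cong_def by auto
          moreover have "set (layers sim \<pi> (Suc n) W ! r) = set L" using eq 0 by simp
          ultimately show "x \<in> Gamma_plus F sim (set (layers sim \<pi> (Suc n) W ! r))" by simp
        qed
      next
        case (Suc r')
        have r': "Suc r' < length (layers sim \<pi> n R)" using r eq Suc by simp
        have "set (layers sim \<pi> n R ! Suc r') \<subseteq> Gamma_plus F sim (set (layers sim \<pi> n R ! r'))"
          using IH r' by blast
        then show ?thesis unfolding eq Suc by simp
      qed
    qed
    have "(wstep F sim)\<^sup>*\<^sup>* W (L @ R)" using lay_weq[OF Suc.prems(2)] L_def R_def by simp
    moreover have "(wstep F sim)\<^sup>*\<^sup>* (L @ R) (sort_key \<pi> L @ R)"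
      using sort_weq[OF sL setLR(1) sym] by (rule weq_append2)
    moreover have "(wstep F sim)\<^sup>*\<^sup>* (sort_key \<pi> L @ R) (sort_key \<pi> L @ concat (layers sim \<pi> n R))"
      using weq_app[of F sim R "concat (layers sim \<pi> n R)" "sort_key \<pi> L" "[]"] IH by simp
    ultimately have "(wstep F sim)\<^sup>*\<^sup>* W (sort_key \<pi> L @ concat (layers sim \<pi> n R))"
      by (meson rtranclp_trans)
    then have P4: "(wstep F sim)\<^sup>*\<^sup>* W (concat (layers sim \<pi> (Suc n) W))"
      unfolding eq by simp
    have P1: "layers sim \<pi> (Suc n) W \<noteq> []" using eq by simp
    show ?thesis
      apply (intro conjI)
      subgoal using P1 False by simp
      subgoal by (rule P2)
      subgoal by (rule P3)
      subgoal by (rule P4)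
      done
  qed
qed



lemma end_state_Cons[simp]: "end_state s ((f, \<tau>) # r) = end_state \<tau> r"
  unfolding end_state_def by auto

lemma end_state_Nil[simp]: "end_state s [] = s"
  unfolding end_state_def by auto

lemma end_state_append: "end_state s (xs @ ys) = end_state (end_state s xs) ys"
  by (induction xs arbitrary: s) auto

lemma steps_ok_append: "steps_ok F \<rho> s (xs @ ys) \<longleftrightarrow> steps_ok F \<rho> s xs \<and> steps_ok F \<rho> (end_state s xs) ys"
  by (induction xs arbitrary: s) auto

lemma step_Omega:
  assumes supp: "\<forall>\<sigma>\<in>\<Omega>. \<forall>f\<in>flaws_at F \<sigma>. set_pmf (\<rho> f \<sigma>) \<subseteq> \<Omega>"
  shows "s \<in> \<Omega> \<Longrightarrow> is_step F \<rho> s f \<tau> \<Longrightarrow> \<tau> \<in> \<Omega>"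
  using supp unfolding is_step_def by blast

lemma steps_Omega:
  assumes supp: "\<forall>\<sigma>\<in>\<Omega>. \<forall>f\<in>flaws_at F \<sigma>. set_pmf (\<rho> f \<sigma>) \<subseteq> \<Omega>"
  shows "s \<in> \<Omega> \<Longrightarrow> steps_ok F \<rho> s xs \<Longrightarrow> end_state s xs \<in> \<Omega>"
  by (induction xs arbitrary: s) (auto dest: step_Omega[OF supp])

lemma steps_F: "steps_ok F \<rho> s xs \<Longrightarrow> set (map fst xs) \<subseteq> F"
proof (induction xs arbitrary: s)
  case Nil then show ?case by simp
next
  case (Cons x xs)
  obtain f \<tau> where x: "x = (f, \<tau>)" by (cases x)
  then show ?case using Cons.IH[of \<tau>] Cons.prems by (auto simp: is_step_def flaws_at_def)
qed

lemma atom_lemma: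
  assumes atom: "atomic F \<rho>"
  shows "steps_ok F \<rho> s1 xs1 \<Longrightarrow> steps_ok F \<rho> s2 xs2 \<Longrightarrow> map fst xs1 = map fst xs2 \<Longrightarrow>
    end_state s1 xs1 = end_state s2 xs2 \<Longrightarrow> s1 = s2 \<and> xs1 = xs2"
proof (induction xs1 arbitrary: s1 s2 xs2)
  case Nil then show ?case by simp
next
  case (Cons x xs1)
  obtain f a where x: "x = (f, a)" by (cases x)
  obtain b r2 where xs2: "xs2 = (f, b) # r2" using Cons.prems(3) x by (cases xs2) auto
  have "a = b \<and> xs1 = r2" using Cons.IH[of a b r2] Cons.prems x xs2 by simp
  moreover have "is_step F \<rho> s1 f a" "is_step F \<rho> s2 f b" using Cons.prems x xs2 by auto
  ultimately have "s1 = s2" using atom unfolding atomic_def by blast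
  then show ?case using \<open>a = b \<and> xs1 = r2\<close> x xs2 by simp
qed

lemma lemma_R:
  assumes supp: "\<forall>\<sigma>\<in>\<Omega>. \<forall>f\<in>flaws_at F \<sigma>. set_pmf (\<rho> f \<sigma>) \<subseteq> \<Omega>"
    and swap: "is_SWAP \<Omega> F \<rho> sim SWAP"
    and W: "(wstep F sim)\<^sup>*\<^sup>* (map fst xs) V" and s: "s \<in> \<Omega>" and ok: "steps_ok F \<rho> s xs"
  shows "\<exists>xs'. (valid_swap sim SWAP)\<^sup>*\<^sup>* (s, xs) (s, xs') \<and> map fst xs' = V \<and>
     steps_ok F \<rho> s xs' \<and> end_state s xs' = end_state s xs"
  using W
proof (induction rule: rtranclp_induct)
  case base then show ?case using ok by auto
next
  case (step y z)
  then obtain xs' where xs': "(valid_swap sim SWAP)\<^sup>*\<^sup>* (s, xs) (s, xs')" "map fst xs' = y"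
     "steps_ok F \<rho> s xs'" "end_state s xs' = end_state s xs" by blast
  from step(2) obtain as a b bs where y: "y = as @ [a, b] @ bs" and ab: "a \<in> F" "b \<in> F"
    "\<not> flaw_cong sim a b" and z: "z = as @ [b, a] @ bs" unfolding wstep_def by blast
  from xs'(2) y obtain ps rest where pr: "xs' = ps @ rest" "map fst ps = as" "map fst rest = [a,b] @ bs"
    by (auto simp: map_eq_append_conv)
  then obtain \<sigma>2 \<sigma>3 qs where rest: "rest = (a, \<sigma>2) # (b, \<sigma>3) # qs" "map fst qs = bs"
    by (cases rest; cases "tl rest") auto
  define e where "e = end_state s ps"
  have okp: "steps_ok F \<rho> s ps" and ok2: "steps_ok F \<rho> e [(a, \<sigma>2), (b, \<sigma>3)]" and okq: "steps_ok F \<rho> \<sigma>3 qs"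
    using xs'(3) unfolding pr rest e_def by (auto simp: steps_ok_append)
  have e: "e \<in> \<Omega>" using steps_Omega[OF supp s okp] e_def by simp
  have sw: "(e, [(a, \<sigma>2), (b, \<sigma>3)]) \<in> swappable_walks \<Omega> F \<rho> sim"
    unfolding swappable_walks_def is_walk_def using e ok2 ab(3) unfolding flaw_cong_def by auto
  then obtain \<sigma>2' where S: "SWAP (e, [(a, \<sigma>2), (b, \<sigma>3)]) = (e, [(b, \<sigma>2'), (a, \<sigma>3)])"
    "is_walk \<Omega> F \<rho> (e, [(b, \<sigma>2'), (a, \<sigma>3)])"
    using swap unfolding is_SWAP_def by blast
  define xs'' where "xs'' = ps @ [(b, \<sigma>2'), (a, \<sigma>3)] @ qs"
  have vs: "valid_swap sim SWAP (s, xs') (s, xs'')"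
    unfolding valid_swap_def
    apply (rule exI[of _ ps], rule exI[of _ a], rule exI[of _ \<sigma>2], rule exI[of _ b],
        rule exI[of _ \<sigma>3], rule exI[of _ qs])
    using pr rest ab(3) S(1) unfolding xs''_def e_def by simp
  have ok'': "steps_ok F \<rho> s xs''"
    using okp S(2) okq unfolding xs''_def is_walk_def e_def by (simp add: steps_ok_append)
  have "end_state s xs'' = end_state s xs'"
    unfolding xs''_def pr rest by (simp add: end_state_append)
  moreover have "map fst xs'' = z" unfolding xs''_def z using pr rest by simp
  ultimately show ?case using xs' vs ok'' by (auto intro: rtranclp.rtrancl_into_rtrancl)
qed

lemma inj_lemma:
  assumes atom: "atomic F \<rho>"
    and supp: "\<forall>\<sigma>\<in>\<Omega>. \<forall>f\<in>flaws_at F \<sigma>. set_pmf (\<rho> f \<sigma>) \<subseteq> \<Omega>"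
    and swap: "is_SWAP \<Omega> F \<rho> sim SWAP"
  shows "\<forall>i<length xs1. fst (xs1 ! i) = \<Lambda> (\<sigma>0, p @ take i xs1) \<Longrightarrow>
    \<forall>i<length xs2. fst (xs2 ! i) = \<Lambda> (\<sigma>0, p @ take i xs2) \<Longrightarrow> s \<in> \<Omega> \<Longrightarrow>
    steps_ok F \<rho> s xs1 \<Longrightarrow> steps_ok F \<rho> s xs2 \<Longrightarrow>
    (wstep F sim)\<^sup>*\<^sup>* (map fst xs1) (map fst xs2) \<Longrightarrow> end_state s xs1 = end_state s xs2 \<Longrightarrow> xs1 = xs2"
proof (induction xs1 arbitrary: p s xs2)
  case Nil then show ?case using weq_length[OF Nil.prems(6)] by simp
next
  case (Cons x r1)
  obtain f \<tau>1 where x: "x = (f, \<tau>1)" by (cases x)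
  have "length xs2 = Suc (length r1)" using weq_length[OF Cons.prems(6)] by simp
  then obtain g \<tau>2 r2 where xs2: "xs2 = (g, \<tau>2) # r2" by (cases xs2) auto
  have f: "f = \<Lambda> (\<sigma>0, p)" using Cons.prems(1) x by (metis append_Nil2 fst_conv length_Cons nth_Cons_0 take0 zero_less_Suc)
  have g: "g = \<Lambda> (\<sigma>0, p)" using Cons.prems(2) xs2 by (metis append_Nil2 fst_conv length_Cons nth_Cons_0 take0 zero_less_Suc)
  have fg: "g = f" using f g by simp
  have weq: "(wstep F sim)\<^sup>*\<^sup>* (map fst r1) (map fst r2)"
    using Cons.prems(6) x xs2 fg weq_cancel by fastforce
  have st1: "is_step F \<rho> s f \<tau>1" "steps_ok F \<rho> \<tau>1 r1" using Cons.prems(4) x by auto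
  have st2: "is_step F \<rho> s f \<tau>2" "steps_ok F \<rho> \<tau>2 r2" using Cons.prems(5) xs2 fg by auto
  have t1: "\<tau>1 \<in> \<Omega>" using step_Omega[OF supp Cons.prems(3) st1(1)] .
  obtain xs' where xs': "map fst xs' = map fst r2" "steps_ok F \<rho> \<tau>1 xs'" "end_state \<tau>1 xs' = end_state \<tau>1 r1"
    using lemma_R[OF supp swap weq t1 st1(2)] by blast
  have "end_state \<tau>1 xs' = end_state \<tau>2 r2" using xs'(3) Cons.prems(7) x xs2 by simp
  then have tt: "\<tau>1 = \<tau>2" using atom_lemma[OF atom xs'(2) st2(2) xs'(1)] by simp
  have "r1 = r2"
  proof (rule Cons.IH[where p="p @ [(f, \<tau>1)]" and s=\<tau>1])
    show "\<forall>i<length r1. fst (r1 ! i) = \<Lambda> (\<sigma>0, (p @ [(f, \<tau>1)]) @ take i r1)"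
    proof (intro allI impI)
      fix i assume "i < length r1"
      then have "fst ((x # r1) ! Suc i) = \<Lambda> (\<sigma>0, p @ take (Suc i) (x # r1))" using Cons.prems(1) by auto
      then show "fst (r1 ! i) = \<Lambda> (\<sigma>0, (p @ [(f, \<tau>1)]) @ take i r1)" using x by simp
    qed
    show "\<forall>i<length r2. fst (r2 ! i) = \<Lambda> (\<sigma>0, (p @ [(f, \<tau>1)]) @ take i r2)"
    proof (intro allI impI)
      fix i assume "i < length r2"
      then have "fst (xs2 ! Suc i) = \<Lambda> (\<sigma>0, p @ take (Suc i) xs2)" using Cons.prems(2) xs2 by auto
      then show "fst (r2 ! i) = \<Lambda> (\<sigma>0, (p @ [(f, \<tau>1)]) @ take i r2)" using xs2 fg tt by simp
    qed
    show "\<tau>1 \<in> \<Omega>" by (rule t1)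
    show "steps_ok F \<rho> \<tau>1 r1" by (rule st1(2))
    show "steps_ok F \<rho> \<tau>1 r2" using st2(2) tt by simp
    show "(wstep F sim)\<^sup>*\<^sup>* (map fst r1) (map fst r2)" by (rule weq)
    show "end_state \<tau>1 r1 = end_state \<tau>1 r2" using Cons.prems(7) x xs2 tt by simp
  qed
  then show ?case using x xs2 fg tt by simp
qed

theorem theorem4:
  fixes \<Omega> :: "'a set" and F :: "'a set set"
    and \<rho> :: "'a set \<Rightarrow> 'a \<Rightarrow> 'a pmf"
    and sim :: "'a set \<Rightarrow> 'a set \<Rightarrow> bool"
    and SWAP :: "'a walk \<Rightarrow> 'a walk"
    and \<Lambda> :: "'a walk \<Rightarrow> 'a set"
    and \<omega> :: "'a pmf"
    and \<pi> :: "'a set \<Rightarrow> nat"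
    and t :: nat
  assumes fin_\<Omega>: "finite \<Omega>" and fin_F: "finite F"
    and flaws: "\<forall>f\<in>F. f \<noteq> {} \<and> f \<subseteq> \<Omega>"
    and supp: "\<forall>\<sigma>\<in>\<Omega>. \<forall>f\<in>flaws_at F \<sigma>. set_pmf (\<rho> f \<sigma>) \<subseteq> \<Omega>"
    and sym: "\<forall>f\<in>F. \<forall>g\<in>F. sim f g \<longrightarrow> sim g f"
    and closure: "\<forall>\<sigma> f \<sigma>'. is_step F \<rho> \<sigma> f \<sigma>' \<longrightarrow>
                    flaws_at F \<sigma>' \<subseteq> (flaws_at F \<sigma> - {f}) \<union> Gamma F sim f"
    and atom: "atomic F \<rho>"
    and swap: "is_SWAP \<Omega> F \<rho> sim SWAP"
    and strat: "is_strategy \<Omega> F \<rho> \<Lambda>"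
    and init: "set_pmf \<omega> \<subseteq> \<Omega>"
    and perm: "bij_betw \<pi> F {..<card F}"
    and t_pos: "1 \<le> t"
  shows "\<exists>Bad\<^sub>\<pi> \<Phi>. (\<forall>w\<in>Bad\<^sub>\<pi>. pi_stable_walk F sim \<pi> w) \<and>
           swapping_mapping sim SWAP (Bad \<Omega> F \<rho> \<omega> \<Lambda> t) \<Phi> \<and>
           bij_betw \<Phi> (Bad \<Omega> F \<rho> \<omega> \<Lambda> t) Bad\<^sub>\<pi>"
proof -
  define B where "B = Bad \<Omega> F \<rho> \<omega> \<Lambda> t"
  define N where "N = (\<lambda>W. concat (layers sim \<pi> (length W) W))"
  define P where "P = (\<lambda>w xs'. (valid_swap sim SWAP)\<^sup>*\<^sup>* w (fst w, xs') \<and> map fst xs' = N (walk_word w) \<and>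
     steps_ok F \<rho> (fst w) xs' \<and> end_state (fst w) xs' = end_state (fst w) (snd w))"
  define \<Phi> where "\<Phi> = (\<lambda>w. (fst w, SOME xs'. P w xs'))"
  have inj\<pi>: "inj_on \<pi> F" using perm by (simp add: bij_betw_def)
  have wB: "is_walk \<Omega> F \<rho> w \<and> walk_length w = t \<and> follows \<Lambda> w" if "w \<in> B" for w
    using that unfolding B_def Bad_def by simp
  have LP: "(layers sim \<pi> (length W) W = [] \<longleftrightarrow> W = []) \<and>
    (\<forall>V\<in>set (layers sim \<pi> (length W) W). V \<noteq> [] \<and> distinct V \<and> set V \<in> Ind F sim \<and>
        sorted_wrt (\<lambda>f g. \<pi> f < \<pi> g) V) \<and>
    (\<forall>r. Suc r < length (layers sim \<pi> (length W) W) \<longrightarrow>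
        set (layers sim \<pi> (length W) W ! Suc r) \<subseteq> Gamma_plus F sim (set (layers sim \<pi> (length W) W ! r))) \<and>
    (wstep F sim)\<^sup>*\<^sup>* W (N W)" if "set W \<subseteq> F" for W
    using layers_props[OF sym inj\<pi> _ that, of "length W"] unfolding N_def by simp
  have WF: "set (walk_word w) \<subseteq> F" if "w \<in> B" for w
    using wB[OF that] steps_F[of F \<rho> "fst w" "snd w"] unfolding is_walk_def walk_word_def by simp
  have exP: "\<exists>xs'. P w xs'" if "w \<in> B" for w
  proof -
    have "(wstep F sim)\<^sup>*\<^sup>* (map fst (snd w)) (N (walk_word w))"
      using LP[OF WF[OF that]] unfolding walk_word_def by blast
    from lemma_R[OF supp swap this, of "fst w"] wB[OF that]
    show ?thesis unfolding P_def is_walk_def by (auto simp: walk_word_def)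
  qed
  have P\<Phi>: "P w (snd (\<Phi> w))" if "w \<in> B" for w
    using someI_ex[OF exP[OF that]] unfolding \<Phi>_def by simp
  have stable: "pi_stable_walk F sim \<pi> (\<Phi> w)" if "w \<in> B" for w
  proof -
    let ?W = "walk_word w"
    let ?Ws = "layers sim \<pi> (length ?W) ?W"
    have ww: "walk_word (\<Phi> w) = N ?W" using P\<Phi>[OF that] unfolding P_def walk_word_def by simp
    have ne: "?W \<noteq> []" using wB[OF that] t_pos unfolding walk_word_def walk_length_def by auto
    note L = LP[OF WF[OF that]]
    have L1: "?Ws \<noteq> []" using L ne by blast
    have L2: "\<forall>V\<in>set ?Ws. V \<noteq> [] \<and> distinct V \<and> set V \<in> Ind F sim \<and>
        sorted_wrt (\<lambda>f g. \<pi> f < \<pi> g) V" using L by blast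
    have L3: "\<forall>r. Suc r < length ?Ws \<longrightarrow> set (?Ws ! Suc r) \<subseteq> Gamma_plus F sim (set (?Ws ! r))"
      using L by blast
    have "stable_seq F sim (map set ?Ws)"
      unfolding stable_seq_def
    proof (intro conjI allI impI)
      show "map set ?Ws \<noteq> []" using L1 by simp
      show "\<forall>I\<in>set (map set ?Ws). I \<in> Ind F sim" using L2 by simp
      fix r assume "Suc r < length (map set ?Ws)"
      then show "map set ?Ws ! Suc r \<subseteq> Gamma_plus F sim (map set ?Ws ! r)" using L3 by simp
    qed
    moreover have "\<forall>V\<in>set ?Ws. V \<noteq> [] \<and> distinct V" using L2 by blast
    moreover have "\<forall>V\<in>set ?Ws. sorted_wrt (\<lambda>f g. \<pi> f < \<pi> g) V" using L2 by blast
    ultimately show ?thesis unfolding pi_stable_walk_def pi_stable_word_def ww N_def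
      by blast
  qed
  have swm: "swapping_mapping sim SWAP B \<Phi>"
    unfolding swapping_mapping_def
  proof
    fix w assume "w \<in> B"
    then show "(valid_swap sim SWAP)\<^sup>*\<^sup>* w (\<Phi> w)" using P\<Phi> unfolding P_def \<Phi>_def by auto
  qed
  have inj: "inj_on \<Phi> B"
  proof (rule inj_onI)
    fix w1 w2 assume w1: "w1 \<in> B" and w2: "w2 \<in> B" and eq: "\<Phi> w1 = \<Phi> w2"
    have s: "fst w1 = fst w2" using eq unfolding \<Phi>_def by simp
    have sn: "snd (\<Phi> w1) = snd (\<Phi> w2)" using eq by simp
    note P1 = P\<Phi>[OF w1, unfolded P_def] and P2 = P\<Phi>[OF w2, unfolded P_def]
    have m1: "map fst (snd (\<Phi> w1)) = N (walk_word w1)" using P1 by blast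
    have m2: "map fst (snd (\<Phi> w2)) = N (walk_word w2)" using P2 by blast
    have NN: "N (walk_word w1) = N (walk_word w2)" using m1 m2 sn by simp
    have e1: "(wstep F sim)\<^sup>*\<^sup>* (walk_word w1) (N (walk_word w1))" using LP[OF WF[OF w1]] by blast
    have e2: "(wstep F sim)\<^sup>*\<^sup>* (walk_word w2) (N (walk_word w2))" using LP[OF WF[OF w2]] by blast
    have we: "(wstep F sim)\<^sup>*\<^sup>* (map fst (snd w1)) (map fst (snd w2))"
    proof -
      have e2': "(wstep F sim)\<^sup>*\<^sup>* (N (walk_word w1)) (walk_word w2)" using weq_sym[OF sym e2] NN by simp
      show ?thesis using rtranclp_trans[OF e1 e2'] unfolding walk_word_def .
    qed
    have en1: "end_state (fst w1) (snd (\<Phi> w1)) = end_state (fst w1) (snd w1)" using P1 by blast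
    have en2: "end_state (fst w2) (snd (\<Phi> w2)) = end_state (fst w2) (snd w2)" using P2 by blast
    have en: "end_state (fst w1) (snd w1) = end_state (fst w1) (snd w2)"
      using en1 en2 sn s by simp
    have wa1: "is_walk \<Omega> F \<rho> w1" "follows \<Lambda> w1" using wB[OF w1] by auto
    have wa2: "is_walk \<Omega> F \<rho> w2" "follows \<Lambda> w2" using wB[OF w2] by auto
    have om: "fst w1 \<in> \<Omega>" using wa1 unfolding is_walk_def by blast
    have ok1: "steps_ok F \<rho> (fst w1) (snd w1)" using wa1 unfolding is_walk_def by blast
    have ok2: "steps_ok F \<rho> (fst w1) (snd w2)" using wa2 s unfolding is_walk_def by simp
    have fo1: "\<forall>i<length (snd w1). fst (snd w1 ! i) = \<Lambda> (fst w1, [] @ take i (snd w1))"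
      using wa1 unfolding follows_def by simp
    have fo2: "\<forall>i<length (snd w2). fst (snd w2 ! i) = \<Lambda> (fst w1, [] @ take i (snd w2))"
      using wa2 s unfolding follows_def by simp
    have "snd w1 = snd w2"
      using fo1 fo2 om ok1 ok2 we en by (rule inj_lemma[OF atom supp swap])
    then show "w1 = w2" using s by (simp add: prod_eq_iff)
  qed
  show ?thesis
    apply (rule exI[of _ "\<Phi> ` B"], rule exI[of _ \<Phi>])
    using stable swm inj unfolding B_def[symmetric] bij_betw_def by blast
qed

end
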